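(* Let $T=(A_1;A_2;\dots;A_p)$ be an $m\times p\times n$ quaternion tensor and $r\ge1$ an integer. Then $\mathrm{rank}(T)\le r$ if and only if there exist $r\times r$ diagonal matrices $D_1,\dots,D_p$ with quaternion entries, an $m\times r$ quaternion matrix $P$ and an $r\times n$ quaternion matrix $Q$ such that $A_k=PD_kQ$ for all $k=1,\dots,p$.
   Context: $\mathbb{H}$ denotes the real quaternions. An $n_1\times n_2\times n_3$ quaternion tensor is an array $T=(T_{ijk})$ with entries in $\mathbb{H}$, $1\le i\le n_1$, $1\le j\le n_2$, $1\le k\le n_3$; it is written $T=(A_1;\dots;A_{n_2})$ where the frontal slice $A_j$ is the $n_1\times n_3$ matrix $(T_{ijk})_{i,k}$. A nonzero tensor is simple if $T_{ijk}=a_ib_jc_k$ (quaternion product in this order) for some $\vec a\in\mathbb{H}^{n_1},\vec b\in\mathbb{H}^{n_2},\vec c\in\mathbb{H}^{n_3}$. The rank of $T$ is the least number of simple tensors summing to $T$ (rank of zero tensor is $0$). *)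

theory Defs
  imports Main "HOL.Real"
begin

datatype quat = Quat (Re: real) (Im1: real) (Im2: real) (Im3: real)

lemma quat_eqI: "Re x = Re y \<Longrightarrow> Im1 x = Im1 y \<Longrightarrow> Im2 x = Im2 y \<Longrightarrow> Im3 x = Im3 y \<Longrightarrow> x = y"
  by (cases x, cases y) simp

instantiation quat :: ring_1
begin

definition "0 = Quat 0 0 0 0"
definition "1 = Quat 1 0 0 0"
definition "x + y = Quat (Re x + Re y) (Im1 x + Im1 y) (Im2 x + Im2 y) (Im3 x + Im3 y)"
definition "- x = Quat (- Re x) (- Im1 x) (- Im2 x) (- Im3 x)"
definition "x - y = Quat (Re x - Re y) (Im1 x - Im1 y) (Im2 x - Im2 y) (Im3 x - Im3 y)"
text \<open>Hamilton product: i^2 = j^2 = k^2 = ijk = -1.\<close>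
definition "x * y = Quat
  (Re x * Re y - Im1 x * Im1 y - Im2 x * Im2 y - Im3 x * Im3 y)
  (Re x * Im1 y + Im1 x * Re y + Im2 x * Im3 y - Im3 x * Im2 y)
  (Re x * Im2 y - Im1 x * Im3 y + Im2 x * Re y + Im3 x * Im1 y)
  (Re x * Im3 y + Im1 x * Im2 y - Im2 x * Im1 y + Im3 x * Re y)"

instance
  by standard (auto intro!: quat_eqI simp: zero_quat_def one_quat_def plus_quat_def
      uminus_quat_def minus_quat_def times_quat_def algebra_simps)

end

text \<open>An m x p x n quaternion tensor is represented by a function
  T :: nat => nat => nat => quat, of which only the entries T i j k with
  i < m, j < p, k < n are relevant (0-based indices). The frontal slice
  A_j is the m x n matrix (T i j k)_{i,k}.\<close>

definition simple_tensor :: "nat \<Rightarrow> nat \<Rightarrow> nat \<Rightarrow> (nat \<Rightarrow> nat \<Rightarrow> nat \<Rightarrow> quat) \<Rightarrow> bool" where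
  "simple_tensor m p n S \<longleftrightarrow>
     (\<exists>i<m. \<exists>j<p. \<exists>k<n. S i j k \<noteq> 0) \<and>
     (\<exists>a b c :: nat \<Rightarrow> quat. \<forall>i<m. \<forall>j<p. \<forall>k<n. S i j k = a i * b j * c k)"

definition tensor_rank :: "nat \<Rightarrow> nat \<Rightarrow> nat \<Rightarrow> (nat \<Rightarrow> nat \<Rightarrow> nat \<Rightarrow> quat) \<Rightarrow> nat" where
  "tensor_rank m p n T = (LEAST r. \<exists>S :: nat \<Rightarrow> nat \<Rightarrow> nat \<Rightarrow> nat \<Rightarrow> quat.
      (\<forall>l<r. simple_tensor m p n (S l)) \<and>
      (\<forall>i<m. \<forall>j<p. \<forall>k<n. T i j k = (\<Sum>l<r. S l i j k)))"

end

theory Submission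
  imports Defs
begin

definition pform :: "nat \<Rightarrow> nat \<Rightarrow> nat \<Rightarrow> (nat \<Rightarrow> nat \<Rightarrow> nat \<Rightarrow> quat) \<Rightarrow> bool" where
  "pform m p n S \<longleftrightarrow> (\<exists>a b c :: nat \<Rightarrow> quat. \<forall>i<m. \<forall>j<p. \<forall>k<n. S i j k = a i * b j * c k)"

lemma reduce:
  fixes r :: nat and S :: "nat \<Rightarrow> nat \<Rightarrow> nat \<Rightarrow> nat \<Rightarrow> quat"
  assumes "\<forall>l<r. pform m p n (S l)"
    and "\<forall>i<m. \<forall>j<p. \<forall>k<n. T i j k = (\<Sum>l<r. S l i j k)"
  shows "\<exists>q\<le>r. \<exists>S'. (\<forall>l<q. simple_tensor m p n (S' l)) \<and>
      (\<forall>i<m. \<forall>j<p. \<forall>k<n. T i j k = (\<Sum>l<q. S' l i j k))"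
  using assms
proof (induction r arbitrary: T)
  case 0
  then show ?case by (intro exI[of _ 0]) auto
next
  case (Suc r)
  define T' where "T' = (\<lambda>i j k. \<Sum>l<r. S l i j k)"
  obtain q S' where q: "q \<le> r" "\<forall>l<q. simple_tensor m p n (S' l)"
    "\<forall>i<m. \<forall>j<p. \<forall>k<n. T' i j k = (\<Sum>l<q. S' l i j k)"
    using Suc.IH[of T'] Suc.prems(1) unfolding T'_def by auto
  have TT: "\<forall>i<m. \<forall>j<p. \<forall>k<n. T i j k = T' i j k + S r i j k"
    using Suc.prems(2) unfolding T'_def by simp
  show ?case
  proof (cases "\<forall>i<m. \<forall>j<p. \<forall>k<n. S r i j k = 0")
    case True
    then show ?thesis using q TT by (intro exI[of _ q]) auto
  next
    case False
    define S'' where "S'' = S'(q := S r)"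
    have "\<forall>l<Suc q. simple_tensor m p n (S'' l)"
      using q(2) False Suc.prems(1) unfolding S''_def simple_tensor_def pform_def
      by (auto simp: less_Suc_eq)
    moreover have "\<forall>i<m. \<forall>j<p. \<forall>k<n. T i j k = (\<Sum>l<Suc q. S'' l i j k)"
    proof (intro allI impI)
      fix i j k assume h: "i < m" "j < p" "k < n"
      have "(\<Sum>l<q. S'' l i j k) = (\<Sum>l<q. S' l i j k)"
        by (rule sum.cong) (auto simp: S''_def)
      then show "T i j k = (\<Sum>l<Suc q. S'' l i j k)"
        using TT q(3) h by (simp add: S''_def)
    qed
    ultimately show ?thesis using q(1) by (intro exI[of _ "Suc q"]) auto
  qed
qed

lemma rank_le:
  fixes r :: nat and S :: "nat \<Rightarrow> nat \<Rightarrow> nat \<Rightarrow> nat \<Rightarrow> quat"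
  assumes "\<forall>l<r. pform m p n (S l)"
    and "\<forall>i<m. \<forall>j<p. \<forall>k<n. T i j k = (\<Sum>l<r. S l i j k)"
  shows "tensor_rank m p n T \<le> r"
proof -
  obtain q S' where "q \<le> r" "\<forall>l<q. simple_tensor m p n (S' l)"
      "\<forall>i<m. \<forall>j<p. \<forall>k<n. T i j k = (\<Sum>l<q. S' l i j k)"
    using reduce[OF assms] by blast
  then have "tensor_rank m p n T \<le> q"
    unfolding tensor_rank_def by (intro Least_le) blast
  then show ?thesis using \<open>q \<le> r\<close> by simp
qed

lemma delta_sum:
  assumes "i < m" "j < (p::nat)"
  shows "(\<Sum>l<m*p. (if l div p = i \<and> l mod p = j then x else 0)) = (x::quat)"
proof -
  have pp: "p > 0" using assms by simp
  have "\<And>l. (l div p = i \<and> l mod p = j) \<longleftrightarrow> l = i*p+j"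
  proof
    fix l assume "l div p = i \<and> l mod p = j"
    then show "l = i*p+j" using div_mult_mod_eq[of l p] by simp
  next
    fix l assume "l = i*p+j"
    then show "l div p = i \<and> l mod p = j" using pp assms(2) by simp
  qed
  then have "(\<Sum>l<m*p. (if l div p = i \<and> l mod p = j then x else 0)) =
      (\<Sum>l<m*p. (if l = i*p+j then x else 0))" by simp
  also have "\<dots> = x"
  proof -
    have "i*p+j < m*p"
    proof -
      have "i*p + j < i*p + p" using assms by simp
      also have "\<dots> = (i+1)*p" by simp
      also have "\<dots> \<le> m*p" using assms by (intro mult_right_mono) auto
      finally show ?thesis .
    qed
    then show ?thesis by (simp add: sum.delta sum.delta')
  qed
  finally show ?thesis .
qed

lemma rank_exists:
  "\<exists>(q::nat) (S::nat \<Rightarrow> nat \<Rightarrow> nat \<Rightarrow> nat \<Rightarrow> quat). (\<forall>l<q. simple_tensor m p n (S l)) \<and>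
      (\<forall>i<m. \<forall>j<p. \<forall>k<n. T i j k = (\<Sum>l<q. S l i j k))"
proof -
  define S where "S = (\<lambda>l i j k. (if i = l div p then 1 else 0) * (if j = l mod p then 1 else 0) * T (l div p) (l mod p) k :: quat)"
  have "\<forall>l<m*p. pform m p n (S l)"
  proof (intro allI impI)
    fix l
    show "pform m p n (S l)" unfolding pform_def S_def
      by (rule exI[of _ "\<lambda>i. if i = l div p then 1 else 0"], rule exI[of _ "\<lambda>j. if j = l mod p then 1 else 0"],
          rule exI[of _ "\<lambda>k. T (l div p) (l mod p) k"]) simp
  qed
  moreover have "\<forall>i<m. \<forall>j<p. \<forall>k<n. T i j k = (\<Sum>l<m*p. S l i j k)"
  proof (intro allI impI)
    fix i j k assume h: "i < m" "j < p" "k < n"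
    have "(\<Sum>l<m*p. S l i j k) = (\<Sum>l<m*p. (if l div p = i \<and> l mod p = j then T i j k else 0))"
      by (rule sum.cong) (auto simp: S_def)
    then show "T i j k = (\<Sum>l<m*p. S l i j k)" using delta_sum[OF h(1,2)] by simp
  qed
  ultimately obtain q S' where "q \<le> m*p" "\<forall>l<q. simple_tensor m p n (S' l)"
      "\<forall>i<m. \<forall>j<p. \<forall>k<n. T i j k = (\<Sum>l<q. S' l i j k)"
    using reduce[of "m*p" m p n S T] by blast
  then show ?thesis by blast
qed

lemma inner_sum:
  fixes r :: nat
  assumes "s < r" "\<forall>t<r. s \<noteq> t \<longrightarrow> D s t = (0::quat)"
  shows "(\<Sum>t<r. P s * D s t * Q t) = P s * D s s * Q s"
proof -
  have "(\<Sum>t<r. P s * D s t * Q t) = (\<Sum>t<r. if t = s then P s * D s s * Q s else 0)"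
    by (rule sum.cong) (use assms in auto)
  also have "\<dots> = P s * D s s * Q s" using assms(1) by (simp add: sum.delta sum.delta')
  finally show ?thesis .
qed

theorem mainTheorem2:
  fixes m p n r :: nat and T :: "nat \<Rightarrow> nat \<Rightarrow> nat \<Rightarrow> quat"
  assumes "r \<ge> 1"
  shows "tensor_rank m p n T \<le> r \<longleftrightarrow>
    (\<exists>(D :: nat \<Rightarrow> nat \<Rightarrow> nat \<Rightarrow> quat) (P :: nat \<Rightarrow> nat \<Rightarrow> quat) (Q :: nat \<Rightarrow> nat \<Rightarrow> quat).
       (\<forall>k<p. \<forall>s<r. \<forall>t<r. s \<noteq> t \<longrightarrow> D k s t = 0) \<and>
       (\<forall>k<p. \<forall>i<m. \<forall>l<n. T i k l = (\<Sum>s<r. \<Sum>t<r. P i s * D k s t * Q t l)))"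
proof
  assume "tensor_rank m p n T \<le> r"
  define q where "q = tensor_rank m p n T"
  obtain S where S: "\<forall>l<q. simple_tensor m p n (S l)"
      "\<forall>i<m. \<forall>j<p. \<forall>k<n. T i j k = (\<Sum>l<q. S l i j k)"
    using LeastI_ex[OF rank_exists[of m p n T]] unfolding q_def tensor_rank_def by blast
  have "\<forall>l\<in>{..<q}. \<exists>f. \<forall>i<m. \<forall>j<p. \<forall>k<n. S l i j k = fst f i * fst (snd f) j * snd (snd f) k"
    using S(1) unfolding simple_tensor_def by fastforce
  then obtain f where f: "\<forall>l<q. \<forall>i<m. \<forall>j<p. \<forall>k<n. S l i j k = fst (f l) i * fst (snd (f l)) j * snd (snd (f l)) k"
    using bchoice by (metis lessThan_iff)
  define D where "D = (\<lambda>k s t. if s = t \<and> s < q then fst (snd (f s)) k else 0)"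
  define P where "P = (\<lambda>i s. fst (f s) i)"
  define Q where "Q = (\<lambda>t l. snd (snd (f t)) l)"
  have qr: "q \<le> r" using \<open>tensor_rank m p n T \<le> r\<close> q_def by simp
  show "\<exists>D P Q. (\<forall>k<p. \<forall>s<r. \<forall>t<r. s \<noteq> t \<longrightarrow> D k s t = 0) \<and>
       (\<forall>k<p. \<forall>i<m. \<forall>l<n. T i k l = (\<Sum>s<r. \<Sum>t<r. P i s * D k s t * Q t l))"
  proof (intro exI conjI allI impI)
    show "\<And>k s t. k < p \<Longrightarrow> s < r \<Longrightarrow> t < r \<Longrightarrow> s \<noteq> t \<Longrightarrow> D k s t = 0"
      by (simp add: D_def)
    fix k i l assume h: "k < p" "i < m" "l < n"
    have "(\<Sum>s<r. \<Sum>t<r. P i s * D k s t * Q t l) = (\<Sum>s<r. P i s * D k s s * Q s l)"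
      by (rule sum.cong[OF refl], rule inner_sum) (auto simp: D_def)
    also have "\<dots> = (\<Sum>s<r. if s \<in> {..<q} then S s i k l else 0)"
      by (rule sum.cong[OF refl]) (use f h in \<open>auto simp: D_def P_def Q_def\<close>)
    also have "\<dots> = (\<Sum>s\<in>{..<r} \<inter> {..<q}. S s i k l)"
      by (simp add: sum.inter_restrict)
    also have "{..<r} \<inter> {..<q} = {..<q}" using qr by auto
    finally show "T i k l = (\<Sum>s<r. \<Sum>t<r. P i s * D k s t * Q t l)"
      using S(2) h by simp
  qed
next
  assume "\<exists>D P Q. (\<forall>k<p. \<forall>s<r. \<forall>t<r. s \<noteq> t \<longrightarrow> D k s t = 0) \<and>
       (\<forall>k<p. \<forall>i<m. \<forall>l<n. T i k l = (\<Sum>s<r. \<Sum>t<r. P i s * D k s t * Q t l))"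
  then obtain D P Q where D: "\<forall>k<p. \<forall>s<r. \<forall>t<r. s \<noteq> t \<longrightarrow> D k s t = 0"
    and TD: "\<forall>k<p. \<forall>i<m. \<forall>l<n. T i k l = (\<Sum>s<r. \<Sum>t<r. P i s * D k s t * Q t l)"
    by blast
  define S where "S = (\<lambda>s i j k. P i s * D j s s * Q s k)"
  have "\<forall>l<r. pform m p n (S l)"
  proof (intro allI impI)
    fix l
    show "pform m p n (S l)" unfolding pform_def S_def
      by (rule exI[of _ "\<lambda>i. P i l"], rule exI[of _ "\<lambda>j. D j l l"], rule exI[of _ "\<lambda>k. Q l k"]) simp
  qed
  moreover have "\<forall>i<m. \<forall>j<p. \<forall>k<n. T i j k = (\<Sum>l<r. S l i j k)"
  proof (intro allI impI)
    fix i j k assume h: "i < m" "j < p" "k < n"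
    have "(\<Sum>s<r. \<Sum>t<r. P i s * D j s t * Q t k) = (\<Sum>s<r. S s i j k)"
      unfolding S_def by (rule sum.cong[OF refl], rule inner_sum) (use D h in auto)
    then show "T i j k = (\<Sum>l<r. S l i j k)" using TD h by simp
  qed
  ultimately show "tensor_rank m p n T \<le> r" by (rule rank_le)
qed

end
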